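(* Let $A_0,A_1,A_2\in\mathbb{R}[x]$ with $A_2\not\equiv0$, let $I$ be an open interval on which $A_2$ has no zeros, and let $g_0,g_1\in\mathbb{R}[x,y]$ with $g_1\not\equiv0$ and $\partial_y(g_0/g_1)\not\equiv0$. Consider the polynomial vector field $\mathcal{X}=P\,\partial_x+Q\,\partial_y$ with $$P=A_2(x)\left(g_0\,\partial_y g_1-g_1\,\partial_y g_0\right),\qquad Q=A_0(x)g_1^2+A_1(x)g_1g_0+A_2(x)g_0^2+A_2(x)\left(g_1\,\partial_x g_0-g_0\,\partial_x g_1\right).$$ Let $w\in C^2(I)$ be any nonzero solution of $A_2w''+A_1w'+A_0w=0$ on $I$, and put $f(x,y)=g_1(x,y)\,w'(x)-g_0(x,y)\,w(x)$ on $I\times\mathbb{R}$. Then $f$ is an invariant of $\mathcal{X}$ with the polynomial cofactor $$k=\left(A_0\,\partial_y g_1+A_1\,\partial_y g_0\right)g_1+A_2\,g_0\,\partial_y g_0+A_2\left(\partial_y g_1\,\partial_x g_0-\partial_y g_0\,\partial_x g_1\right),$$ i.e. $P\,\partial_x f+Q\,\partial_y f=k\,f$ on $I\times\mathbb{R}$.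
   Context: A $C^1$ function $f$ on an open set $U\subset\mathbb{R}^2$ is called an invariant of a vector field $\mathcal{X}=P\partial_x+Q\partial_y$ with cofactor $k$ if $P\,\partial_x f+Q\,\partial_y f=k f$ on $U$. *)

theory Defs
  imports "HOL-Analysis.Analysis" "HOL-Computational_Algebra.Polynomial"
begin

text \<open>Bivariate real polynomials R[x,y] are represented as polynomials in y whose
coefficients are polynomials in x, i.e. the type real poly poly.\<close>

type_synonym bipoly = "real poly poly"

definition ev2 :: "bipoly \<Rightarrow> real \<times> real \<Rightarrow> real" where
  "ev2 p z = poly (map_poly (\<lambda>c. poly c (fst z)) p) (snd z)"

definition dx :: "bipoly \<Rightarrow> bipoly" where
  "dx p = map_poly pderiv p"

definition dy :: "bipoly \<Rightarrow> bipoly" where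
  "dy p = pderiv p"

definition cx :: "real poly \<Rightarrow> bipoly" where
  "cx a = [:a:]"

definition is_invariant ::
  "(real \<times> real \<Rightarrow> real) \<Rightarrow> (real \<times> real \<Rightarrow> real) \<Rightarrow> (real \<times> real \<Rightarrow> real)
   \<Rightarrow> (real \<times> real \<Rightarrow> real) \<Rightarrow> (real \<times> real) set \<Rightarrow> bool" where
  "is_invariant P Q f k U \<longleftrightarrow> open U \<and>
     (\<exists>fx fy. continuous_on U fx \<and> continuous_on U fy \<and>
       (\<forall>z\<in>U. (f has_derivative (\<lambda>h. fst h * fx z + snd h * fy z)) (at z)) \<and>
       (\<forall>z\<in>U. P z * fx z + Q z * fy z = k z * f z))"

end

theory Submission
  imports Defs
begin

lemma ev2_pCons: "ev2 (pCons a p) z = poly a (fst z) + snd z * ev2 p z"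
  by (simp add: ev2_def map_poly_pCons)
lemma ev2_0[simp]: "ev2 0 z = 0"
  by (simp add: ev2_def)
lemma ev2_add[simp]: "ev2 (p + q) z = ev2 p z + ev2 q z"
proof (induction p arbitrary: q)
  case 0 then show ?case by simp
next
  case (pCons a p)
  obtain b r where q: "q = pCons b r" by (cases q) auto
  show ?case using pCons.IH[of r] by (simp add: q ev2_pCons algebra_simps)
qed
lemma ev2_diff[simp]: "ev2 (p - q) z = ev2 p z - ev2 q z"
  using ev2_add[of "p - q" q z] by simp
lemma ev2_smult[simp]: "ev2 (smult a q) z = poly a (fst z) * ev2 q z"
  by (induction q) (auto simp: ev2_pCons algebra_simps)
lemma ev2_mult[simp]: "ev2 (p * q) z = ev2 p z * ev2 q z"
  by (induction p) (auto simp: ev2_pCons algebra_simps mult_pCons_left)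
lemma ev2_pow[simp]: "ev2 (p ^ n) z = ev2 p z ^ n"
proof (induction n)
  case 0
  have "ev2 (pCons 1 0) z = 1" by (simp only: ev2_pCons) simp
  then show ?case by (simp add: one_pCons)
next
  case (Suc n) then show ?case by simp
qed
lemma ev2_cx[simp]: "ev2 (cx a) z = poly a (fst z)"
  unfolding cx_def by (simp only: ev2_pCons) simp

lemma ev2_deriv:
  "(ev2 p has_derivative (\<lambda>h. fst h * ev2 (dx p) z + snd h * ev2 (dy p) z)) (at z)"
proof (induction p)
  case 0
  then show ?case by (simp add: dx_def dy_def)
next
  case (pCons a p)
  have dxe: "dx (pCons a p) = pCons (pderiv a) (dx p)"
    by (simp add: dx_def map_poly_pCons)
  have dye: "dy (pCons a p) = p + pCons 0 (dy p)"
    by (simp add: dy_def pderiv_pCons)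
  have fe: "ev2 (pCons a p) = (\<lambda>z. poly a (fst z) + snd z * ev2 p z)"
    by (rule ext) (simp add: ev2_pCons)
  have da: "((\<lambda>z. poly a (fst z)) has_derivative (\<lambda>h. fst h * poly (pderiv a) (fst z))) (at z)"
  proof -
    have "(poly a has_derivative (\<lambda>t. t * poly (pderiv a) (fst z))) (at (fst z))"
      using poly_DERIV[of a "fst z"] by (simp add: has_field_derivative_def mult.commute[of _ "poly (pderiv a) (fst z)"])
    from has_derivative_compose[OF has_derivative_fst[OF has_derivative_ident] this]
    show ?thesis by simp
  qed
  have ds: "(snd has_derivative snd) (at z)"
    by (rule bounded_linear_imp_has_derivative[OF bounded_linear_snd])
  have "((\<lambda>z. poly a (fst z) + snd z * ev2 p z) has_derivative
     (\<lambda>h. fst h * poly (pderiv a) (fst z) + (snd z * (fst h * ev2 (dx p) z + snd h * ev2 (dy p) z) + snd h * ev2 p z))) (at z)"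
    by (intro has_derivative_add da has_derivative_mult ds pCons.IH)
  then show ?case unfolding fe dxe dye
    by (rule has_derivative_eq_rhs) (auto simp: ev2_pCons algebra_simps)
qed

lemma ev2_cont: "continuous_on S (ev2 p)"
  using ev2_deriv has_derivative_continuous continuous_at_imp_continuous_on by blast

theorem mainTheorem2:
  fixes A0 A1 A2 :: "real poly" and g0 g1 :: bipoly and I :: "real set"
    and w w1 w2 :: "real \<Rightarrow> real"
  assumes "A2 \<noteq> 0"
    and "open I" and "is_interval I" and "I \<noteq> {}"
    and "\<forall>x\<in>I. poly A2 x \<noteq> 0"
    and "g1 \<noteq> 0"
    and "dy g0 * g1 - g0 * dy g1 \<noteq> 0"
    and "\<forall>x\<in>I. (w has_real_derivative w1 x) (at x)"
    and "\<forall>x\<in>I. (w1 has_real_derivative w2 x) (at x)"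
    and "continuous_on I w2"
    and "\<forall>x\<in>I. poly A2 x * w2 x + poly A1 x * w1 x + poly A0 x * w x = 0"
    and "\<exists>x\<in>I. w x \<noteq> 0"
  shows "is_invariant
     (ev2 (cx A2 * (g0 * dy g1 - g1 * dy g0)))
     (ev2 (cx A0 * g1\<^sup>2 + cx A1 * g1 * g0 + cx A2 * g0\<^sup>2
           + cx A2 * (g1 * dx g0 - g0 * dx g1)))
     (\<lambda>z. ev2 g1 z * w1 (fst z) - ev2 g0 z * w (fst z))
     (ev2 ((cx A0 * dy g1 + cx A1 * dy g0) * g1 + cx A2 * g0 * dy g0
           + cx A2 * (dy g1 * dx g0 - dy g0 * dx g1)))
     (I \<times> UNIV)"
proof -
  define fx where "fx z = ev2 (dx g1) z * w1 (fst z) + ev2 g1 z * w2 (fst z)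
      - ev2 (dx g0) z * w (fst z) - ev2 g0 z * w1 (fst z)" for z
  define fy where "fy z = ev2 (dy g1) z * w1 (fst z) - ev2 (dy g0) z * w (fst z)" for z
  have cw: "continuous_on I w" using assms(8)
    by (meson DERIV_isCont continuous_at_imp_continuous_on)
  have cw1: "continuous_on I w1" using assms(9)
    by (meson DERIV_isCont continuous_at_imp_continuous_on)
  have fstI: "fst ` (I \<times> UNIV) \<subseteq> I" by auto
  have cf: "continuous_on (I \<times> UNIV) (h \<circ> fst)" if "continuous_on I h" for h :: "real \<Rightarrow> real"
    by (rule continuous_on_compose[OF continuous_on_fst[OF continuous_on_id]])
       (rule continuous_on_subset[OF that fstI])
  have cw': "continuous_on (I \<times> UNIV) (\<lambda>z. w (fst z))"
    "continuous_on (I \<times> UNIV) (\<lambda>z. w1 (fst z))"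
    "continuous_on (I \<times> UNIV) (\<lambda>z. w2 (fst z))"
    using cf[OF cw] cf[OF cw1] cf[OF assms(10)] by (simp_all add: o_def)
  have c1: "continuous_on (I \<times> UNIV) fx" unfolding fx_def
    by (intro continuous_intros ev2_cont cw')
  have c2: "continuous_on (I \<times> UNIV) fy" unfolding fy_def
    by (intro continuous_intros ev2_cont cw')
  have dw: "((\<lambda>z. h (fst z)) has_derivative (\<lambda>k. fst k * h' (fst z))) (at z)"
    if "(h has_real_derivative h' (fst z)) (at (fst z))" for h h' and z :: "real \<times> real"
  proof -
    have "(h has_derivative (\<lambda>t. t * h' (fst z))) (at (fst z))"
      using that by (simp add: has_field_derivative_def mult.commute[of _ "h' (fst z)"])
    from has_derivative_compose[OF has_derivative_fst[OF has_derivative_ident] this]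
    show ?thesis by simp
  qed
  have d: "((\<lambda>z. ev2 g1 z * w1 (fst z) - ev2 g0 z * w (fst z)) has_derivative
      (\<lambda>h. fst h * fx z + snd h * fy z)) (at z)" if z: "z \<in> I \<times> UNIV" for z
  proof -
    have "fst z \<in> I" using z by auto
    then have a: "((\<lambda>z. w (fst z)) has_derivative (\<lambda>k. fst k * w1 (fst z))) (at z)"
      "((\<lambda>z. w1 (fst z)) has_derivative (\<lambda>k. fst k * w2 (fst z))) (at z)"
      using assms(8,9) by (auto intro: dw)
    let ?a = "ev2 (dx g1) z" and ?b = "ev2 (dy g1) z" and ?c = "ev2 (dx g0) z" and ?d = "ev2 (dy g0) z"
    have "((\<lambda>z. ev2 g1 z * w1 (fst z) - ev2 g0 z * w (fst z)) has_derivative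
      (\<lambda>h. (ev2 g1 z * (fst h * w2 (fst z)) + (fst h * ?a + snd h * ?b) * w1 (fst z))
         - (ev2 g0 z * (fst h * w1 (fst z)) + (fst h * ?c + snd h * ?d) * w (fst z)))) (at z)"
      by (intro has_derivative_diff has_derivative_mult ev2_deriv a)
    then show ?thesis
      by (rule has_derivative_eq_rhs) (auto simp: fx_def fy_def algebra_simps)
  qed
  have e: "ev2 (cx A2 * (g0 * dy g1 - g1 * dy g0)) z * fx z +
     ev2 (cx A0 * g1\<^sup>2 + cx A1 * g1 * g0 + cx A2 * g0\<^sup>2 + cx A2 * (g1 * dx g0 - g0 * dx g1)) z * fy z =
     ev2 ((cx A0 * dy g1 + cx A1 * dy g0) * g1 + cx A2 * g0 * dy g0 + cx A2 * (dy g1 * dx g0 - dy g0 * dx g1)) z *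
     (ev2 g1 z * w1 (fst z) - ev2 g0 z * w (fst z))" if z: "z \<in> I \<times> UNIV" for z
  proof -
    have ode: "poly A2 (fst z) * w2 (fst z) + poly A1 (fst z) * w1 (fst z) + poly A0 (fst z) * w (fst z) = 0"
      using assms(11) z by auto
    have id: "\<And>a0 a1 a2 g0 g1 g0x g1x g0y g1y w w1 w2 :: real.
      (a2*(g0*g1y-g1*g0y)) * (g1x*w1+g1*w2-g0x*w-g0*w1) + (a0*g1^2+a1*g1*g0+a2*g0^2+a2*(g1*g0x-g0*g1x))*(g1y*w1-g0y*w)
      - ((a0*g1y+a1*g0y)*g1+a2*g0*g0y+a2*(g1y*g0x-g0y*g1x))*(g1*w1-g0*w) = (g0*g1y-g1*g0y)*g1*(a2*w2+a1*w1+a0*w)"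
      by algebra
    show ?thesis
      using id[of "poly A2 (fst z)" "ev2 g0 z" "ev2 (dy g1) z" "ev2 g1 z" "ev2 (dy g0) z"
          "ev2 (dx g1) z" "w1 (fst z)" "w2 (fst z)" "ev2 (dx g0) z" "w (fst z)"
          "poly A0 (fst z)" "poly A1 (fst z)"] ode
      by (simp add: fx_def fy_def)
  qed
  show ?thesis unfolding is_invariant_def
    using assms(2) c1 c2 d e by (intro conjI exI[of _ fx] exI[of _ fy]) (auto intro: open_Times)
qed

end
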